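(* Assume the setting described in the context. Let $\lambda\in\mathbb{R}^F$ satisfy $$\lambda_f\ge\sum_{\sigma\in f:\,\sigma'\in A(f,\sigma)}\rho(\sigma'\mid f,\sigma)\frac{\omega(\sigma)}{\omega(\sigma')}\quad\text{for all }f\in F,\ \sigma'\in\Omega.$$ Let $W$ be a word and $\mathcal{X}$ a valid set of walks such that $W$ is a prefix of the word of every walk in $\mathcal{X}$. Then $$\sum_{\tau\in\mathcal{X}}p(\tau)\le\gamma^{\mathrm{init}}\cdot\lambda_W.$$
   Context: Setting: $\Omega$ is a finite set and $F$ a finite set of flaws, each a nonempty subset of $\Omega$; $F_\sigma=\{f:\sigma\in f\}$. For $\sigma\in\Omega$ and $f\in F_\sigma$ there is a probability distribution $\rho(\cdot\mid f,\sigma)$ on $\Omega$ with support $A(f,\sigma)$. $\omega$ is a probability distribution on $\Omega$ with $\omega(\sigma)>0$ for all $\sigma$, and $\omega^{\mathrm{init}}$ is a probability distribution on $\Omega$. Set $\gamma^{\mathrm{init}}=\max_\sigma\omega^{\mathrm{init}}(\sigma)/\omega(\sigma)$. A walk is a sequence $\tau=\sigma_1\xrightarrow{w_1}\sigma_2\cdots\xrightarrow{w_t}\sigma_{t+1}$ with $w_i\in F_{\sigma_i}$ and $\sigma_{i+1}\in A(w_i,\sigma_i)$. Its word is $w_1\ldots w_t$, and $$p(\tau)=\omega^{\mathrm{init}}(\sigma_1)\prod_{i=1}^t\rho(\sigma_{i+1}\mid w_i,\sigma_i).$$ A word is a finite sequence of flaws; for $W=w_1\ldots w_k$, $\lambda_W=\prod_i\lambda_{w_i}$.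 A word $W$ is a prefix of a word $U$ if $U=WU'$ for some word $U'$. A deterministic strategy assigns to each walk whose last state $\sigma$ is flawed a flaw in $F_\sigma$; a walk follows it if each $w_i$ is the flaw assigned to the prefix ending at $\sigma_i$. A set of walks is valid if all its walks follow one common deterministic strategy and no walk in it is a proper prefix of another (i.e., a walk $\tau$ is never an initial segment, different from $\tau'$, of some $\tau'$ in the set). *)

theory Defs
  imports "HOL-Analysis.Analysis"
begin

text \<open>States have type 'a; a flaw is a subset of the state space, so flaws have type 'a set.
  rho f s s' stands for rho(s' | f, s).  A walk
  s_1 -w_1-> s_2 ... -w_t-> s_(t+1) is represented as the pair (ss, ws) with
  ss = [s_1, ..., s_(t+1)] and ws = [w_1, ..., w_t].\<close>

definition flaws_at :: "'a set set \<Rightarrow> 'a \<Rightarrow> 'a set set" where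
  "flaws_at F s = {f \<in> F. s \<in> f}"

definition prob_dist :: "'a set \<Rightarrow> ('a \<Rightarrow> real) \<Rightarrow> bool" where
  "prob_dist \<Omega> d \<longleftrightarrow> (\<forall>x\<in>\<Omega>. d x \<ge> 0) \<and> (\<Sum>x\<in>\<Omega>. d x) = 1"

definition supp :: "'a set \<Rightarrow> ('a set \<Rightarrow> 'a \<Rightarrow> 'a \<Rightarrow> real) \<Rightarrow> 'a set \<Rightarrow> 'a \<Rightarrow> 'a set" where
  "supp \<Omega> rho f s = {s' \<in> \<Omega>. rho f s s' > 0}"

definition setting ::
  "'a set \<Rightarrow> 'a set set \<Rightarrow> ('a set \<Rightarrow> 'a \<Rightarrow> 'a \<Rightarrow> real) \<Rightarrow> ('a \<Rightarrow> real) \<Rightarrow> ('a \<Rightarrow> real) \<Rightarrow> bool" where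
  "setting \<Omega> F rho \<omega> \<omega>i \<longleftrightarrow>
     finite \<Omega> \<and> finite F \<and> (\<forall>f\<in>F. f \<noteq> {} \<and> f \<subseteq> \<Omega>) \<and>
     (\<forall>s\<in>\<Omega>. \<forall>f\<in>flaws_at F s. prob_dist \<Omega> (rho f s)) \<and>
     prob_dist \<Omega> \<omega> \<and> (\<forall>s\<in>\<Omega>. \<omega> s > 0) \<and> prob_dist \<Omega> \<omega>i"

definition gamma_init :: "'a set \<Rightarrow> ('a \<Rightarrow> real) \<Rightarrow> ('a \<Rightarrow> real) \<Rightarrow> real" where
  "gamma_init \<Omega> \<omega> \<omega>i = Max ((\<lambda>s. \<omega>i s / \<omega> s) ` \<Omega>)"

definition is_walk ::
  "'a set \<Rightarrow> 'a set set \<Rightarrow> ('a set \<Rightarrow> 'a \<Rightarrow> 'a \<Rightarrow> real) \<Rightarrow> 'a list \<times> 'a set list \<Rightarrow> bool" where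
  "is_walk \<Omega> F rho \<tau> \<longleftrightarrow>
     (let ss = fst \<tau>; ws = snd \<tau> in
       length ss = Suc (length ws) \<and> set ss \<subseteq> \<Omega> \<and>
       (\<forall>i<length ws. ws ! i \<in> flaws_at F (ss ! i) \<and>
                      ss ! Suc i \<in> supp \<Omega> rho (ws ! i) (ss ! i)))"

definition walk_prob ::
  "('a \<Rightarrow> real) \<Rightarrow> ('a set \<Rightarrow> 'a \<Rightarrow> 'a \<Rightarrow> real) \<Rightarrow> 'a list \<times> 'a set list \<Rightarrow> real" where
  "walk_prob \<omega>i rho \<tau> =
     (let ss = fst \<tau>; ws = snd \<tau> in
       \<omega>i (ss ! 0) * (\<Prod>i<length ws. rho (ws ! i) (ss ! i) (ss ! Suc i)))"

definition word_weight :: "('a set \<Rightarrow> real) \<Rightarrow> 'a set list \<Rightarrow> real" where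
  "word_weight lam W = prod_list (map lam W)"

definition det_strategy ::
  "'a set \<Rightarrow> 'a set set \<Rightarrow> ('a set \<Rightarrow> 'a \<Rightarrow> 'a \<Rightarrow> real) \<Rightarrow> ('a list \<times> 'a set list \<Rightarrow> 'a set) \<Rightarrow> bool" where
  "det_strategy \<Omega> F rho S \<longleftrightarrow>
     (\<forall>\<tau>. is_walk \<Omega> F rho \<tau> \<and> flaws_at F (last (fst \<tau>)) \<noteq> {} \<longrightarrow>
           S \<tau> \<in> flaws_at F (last (fst \<tau>)))"

definition follows :: "('a list \<times> 'a set list \<Rightarrow> 'a set) \<Rightarrow> 'a list \<times> 'a set list \<Rightarrow> bool" where
  "follows S \<tau> \<longleftrightarrow>
     (\<forall>i<length (snd \<tau>). snd \<tau> ! i = S (take (Suc i) (fst \<tau>), take i (snd \<tau>)))"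

definition walk_prefix :: "'a list \<times> 'a set list \<Rightarrow> 'a list \<times> 'a set list \<Rightarrow> bool" where
  "walk_prefix \<tau> \<tau>' \<longleftrightarrow>
     (\<exists>us vs. fst \<tau>' = fst \<tau> @ us \<and> snd \<tau>' = snd \<tau> @ vs)"

definition valid_walks ::
  "'a set \<Rightarrow> 'a set set \<Rightarrow> ('a set \<Rightarrow> 'a \<Rightarrow> 'a \<Rightarrow> real) \<Rightarrow> ('a list \<times> 'a set list) set \<Rightarrow> bool" where
  "valid_walks \<Omega> F rho X \<longleftrightarrow>
     (\<forall>\<tau>\<in>X. is_walk \<Omega> F rho \<tau>) \<and>
     (\<exists>S. det_strategy \<Omega> F rho S \<and> (\<forall>\<tau>\<in>X. follows S \<tau>)) \<and>
     (\<forall>\<tau>\<in>X. \<forall>\<tau>'\<in>X. walk_prefix \<tau> \<tau>' \<longrightarrow> \<tau> = \<tau>')"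

end

theory Submission
  imports Defs
begin

lemma is_walk_prefix:
  assumes w: "is_walk \<Omega> F rho (ss @ us, ws @ vs)" and l: "length ss = Suc (length ws)"
  shows "is_walk \<Omega> F rho (ss, ws)"
proof -
  have w': "length (ss@us) = Suc (length (ws@vs)) \<and> set (ss@us) \<subseteq> \<Omega> \<and>
      (\<forall>i<length (ws@vs). (ws @ vs) ! i \<in> flaws_at F ((ss @ us) ! i) \<and>
             (ss @ us) ! Suc i \<in> supp \<Omega> rho ((ws @ vs) ! i) ((ss @ us) ! i))"
    using w unfolding is_walk_def Let_def fst_conv snd_conv .
  note h = w'[THEN conjunct2, THEN conjunct2] and s = w'[THEN conjunct2, THEN conjunct1]
  have "\<forall>i<length ws. ws ! i \<in> flaws_at F (ss ! i) \<and> ss ! Suc i \<in> supp \<Omega> rho (ws ! i) (ss ! i)"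
  proof (intro allI impI)
    fix i assume i: "i < length ws"
    have e: "(ws@vs)!i = ws!i" "(ss@us)!i = ss!i" "(ss@us)!Suc i = ss!Suc i"
      using i l by (auto simp: nth_append)
    have "i < length (ws@vs)" using i by simp
    from h[rule_format, OF this] show "ws ! i \<in> flaws_at F (ss ! i) \<and> ss ! Suc i \<in> supp \<Omega> rho (ws ! i) (ss ! i)"
      unfolding e .
  qed
  moreover have "set ss \<subseteq> \<Omega>" using s by simp
  ultimately show ?thesis unfolding is_walk_def Let_def fst_conv snd_conv
    using l by (intro conjI) assumption+
qed

lemma walk_prob_snoc:
  assumes "length ss = Suc (length ws)"
  shows "walk_prob \<omega>i rho (ss @ [x], ws @ [f]) = walk_prob \<omega>i rho (ss, ws) * rho f (ss ! length ws) x"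
proof -
  have "(\<Prod>i<length ws. rho ((ws @ [f]) ! i) ((ss @ [x]) ! i) ((ss @ [x]) ! Suc i))
       = (\<Prod>i<length ws. rho (ws ! i) (ss ! i) (ss ! Suc i))"
    using assms by (intro prod.cong) (auto simp: nth_append)
  moreover have "(ss @ [x]) ! 0 = ss ! 0" using assms by (simp add: nth_append)
  moreover have "(ss @ [x]) ! length ws = ss ! length ws" using assms by (simp add: nth_append)
  moreover have "(ss @ [x]) ! Suc (length ws) = x" using assms by (simp add: nth_append)
  ultimately show ?thesis unfolding walk_prob_def Let_def fst_conv snd_conv length_append_singleton
      prod.lessThan_Suc by (simp only: mult.assoc nth_append_length)
qed

lemma walk_prob_nonneg:
  assumes "prob_dist \<Omega> \<omega>i" "is_walk \<Omega> F rho \<tau>"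
  shows "walk_prob \<omega>i rho \<tau> \<ge> 0"
proof -
  obtain ss ws where t: "\<tau> = (ss, ws)" by (cases \<tau>)
  have w: "length ss = Suc (length ws) \<and> set ss \<subseteq> \<Omega> \<and>
       (\<forall>i<length ws. ws ! i \<in> flaws_at F (ss ! i) \<and> ss ! Suc i \<in> supp \<Omega> rho (ws ! i) (ss ! i))"
    using assms(2) unfolding t is_walk_def Let_def fst_conv snd_conv .
  have "ss ! 0 \<in> set ss" using w by simp
  hence "ss ! 0 \<in> \<Omega>" using w by blast
  hence "\<omega>i (ss ! 0) \<ge> 0" using assms(1) unfolding prob_dist_def by auto
  moreover have "\<And>i. i < length ws \<Longrightarrow> rho (ws ! i) (ss ! i) (ss ! Suc i) \<ge> 0"
  proof -
    fix i assume "i < length ws"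
    hence "ss ! Suc i \<in> supp \<Omega> rho (ws ! i) (ss ! i)" using w by blast
    thus "rho (ws ! i) (ss ! i) (ss ! Suc i) \<ge> 0" unfolding supp_def by simp
  qed
  ultimately show ?thesis unfolding t walk_prob_def Let_def fst_conv snd_conv
    by (intro mult_nonneg_nonneg prod_nonneg) auto
qed

lemma decomp:
  assumes "walk_prefix (ss, ws) \<tau>" "is_walk \<Omega> F rho \<tau>" "length ss = Suc (length ws)"
    "length (snd \<tau>) > length ws"
  shows "fst \<tau> = (ss @ [fst \<tau> ! Suc (length ws)]) @ drop (Suc (Suc (length ws))) (fst \<tau>)
       \<and> snd \<tau> = (ws @ [snd \<tau> ! length ws]) @ drop (Suc (length ws)) (snd \<tau>)"
proof -
  obtain us vs where u: "fst \<tau> = ss @ us" "snd \<tau> = ws @ vs"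
    using assms(1) unfolding walk_prefix_def by auto
  have l: "length (fst \<tau>) = Suc (length (snd \<tau>))" using assms(2) unfolding is_walk_def Let_def by auto
  have "vs \<noteq> []" using assms(4) u by auto
  moreover have "us \<noteq> []" using l u assms(3,4) by auto
  ultimately show ?thesis using u assms(3)
    by (auto simp: nth_append neq_Nil_conv)
qed

lemma setting_rho:
  assumes "setting \<Omega> F rho \<omega> \<omega>i" "s \<in> \<Omega>" "f \<in> flaws_at F s"
  shows "\<And>x. x \<in> \<Omega> \<Longrightarrow> rho f s x \<ge> 0" "(\<Sum>x\<in>\<Omega>. rho f s x) = 1"
  using assms unfolding setting_def prob_dist_def by auto

lemma ext_sum:
  assumes set: "setting \<Omega> F rho \<omega> \<omega>i"
  shows "finite Y \<Longrightarrow> is_walk \<Omega> F rho (ss, ws) \<Longrightarrow>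
    (\<forall>\<tau>\<in>Y. is_walk \<Omega> F rho \<tau> \<and> follows S \<tau> \<and> walk_prefix (ss, ws) \<tau> \<and> length (snd \<tau>) \<le> length ws + n) \<Longrightarrow>
    (\<forall>\<tau>\<in>Y. \<forall>\<tau>'\<in>Y. walk_prefix \<tau> \<tau>' \<longrightarrow> \<tau> = \<tau>') \<Longrightarrow>
    sum (walk_prob \<omega>i rho) Y \<le> walk_prob \<omega>i rho (ss, ws)"
proof (induction n arbitrary: ss ws Y rule: less_induct)
  case (less n)
  note fin = less.prems(1) and pw = less.prems(2) and props = less.prems(3) and pf = less.prems(4)
  have pd: "prob_dist \<Omega> \<omega>i" using set unfolding setting_def by auto
  have lss: "length ss = Suc (length ws)" and sO: "set ss \<subseteq> \<Omega>"
    using pw unfolding is_walk_def Let_def by auto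
  show ?case
  proof (cases "\<exists>\<tau>\<in>Y. length (snd \<tau>) = length ws")
    case True
    then obtain \<tau> where t: "\<tau> \<in> Y" "length (snd \<tau>) = length ws" by auto
    obtain us vs where u: "fst \<tau> = ss @ us" "snd \<tau> = ws @ vs"
      using props t(1) unfolding walk_prefix_def by auto
    have l: "length (fst \<tau>) = Suc (length (snd \<tau>))"
      using props t(1) unfolding is_walk_def Let_def by auto
    have "\<tau> = (ss, ws)" using u t(2) l lss by (cases \<tau>) auto
    hence "Y = {(ss, ws)}" using t(1) pf props by auto
    thus ?thesis by simp
  next
    case False
    show ?thesis
    proof (cases "Y = {}")
      case True
      thus ?thesis using walk_prob_nonneg[OF pd pw] by simp
    next
      case ne: False
      then obtain \<tau>0 where t0: "\<tau>0 \<in> Y" by auto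
      have gt: "\<And>\<tau>. \<tau> \<in> Y \<Longrightarrow> length (snd \<tau>) > length ws"
      proof -
        fix \<tau> assume "\<tau> \<in> Y"
        then obtain vs where "snd \<tau> = ws @ vs" using props unfolding walk_prefix_def by auto
        hence "length (snd \<tau>) \<ge> length ws" by simp
        moreover have "length (snd \<tau>) \<noteq> length ws" using False \<open>\<tau> \<in> Y\<close> by blast
        ultimately show "length (snd \<tau>) > length ws" by linarith
      qed
      obtain m where nm: "n = Suc m" using gt[OF t0] props t0 by (cases n) auto
      define k where "k = length ws"
      define f where "f = S (ss, ws)"
      define \<sigma> where "\<sigma> = ss ! k"
      define nx where "nx = (\<lambda>\<tau>::'a list \<times> 'a set list. fst \<tau> ! Suc k)"
      have dec: "\<And>\<tau>. \<tau> \<in> Y \<Longrightarrow> fst \<tau> = (ss @ [nx \<tau>]) @ drop (Suc (Suc k)) (fst \<tau>)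
           \<and> snd \<tau> = (ws @ [f]) @ drop (Suc k) (snd \<tau>)"
      proof -
        fix \<tau> assume tY: "\<tau> \<in> Y"
        have d: "fst \<tau> = (ss @ [fst \<tau> ! Suc (length ws)]) @ drop (Suc (Suc (length ws))) (fst \<tau>)
           \<and> snd \<tau> = (ws @ [snd \<tau> ! length ws]) @ drop (Suc (length ws)) (snd \<tau>)"
          using decomp[of ss ws \<tau>] props tY lss gt[OF tY] by blast
        have fo: "follows S \<tau>" using props tY by blast
        have h1: "snd \<tau> ! length ws = S (take (Suc (length ws)) (fst \<tau>), take (length ws) (snd \<tau>))"
          using fo gt[OF tY] unfolding follows_def by blast
        obtain us vs where uv: "fst \<tau> = ss @ us" "snd \<tau> = ws @ vs"
          using props tY unfolding walk_prefix_def fst_conv snd_conv by blast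
        have "take (Suc (length ws)) (fst \<tau>) = ss" unfolding uv(1) using lss by simp
        moreover have "take (length ws) (snd \<tau>) = ws" unfolding uv(2) by simp
        ultimately have h2: "snd \<tau> ! length ws = f" using h1 unfolding f_def by simp
        show "fst \<tau> = (ss @ [nx \<tau>]) @ drop (Suc (Suc k)) (fst \<tau>)
           \<and> snd \<tau> = (ws @ [f]) @ drop (Suc k) (snd \<tau>)"
          unfolding nx_def k_def using d[unfolded h2] .
      qed
      have fsig: "f \<in> flaws_at F \<sigma>"
      proof -
        have w0: "is_walk \<Omega> F rho \<tau>0" using props t0 by blast
        have "is_walk \<Omega> F rho (ss @ [nx \<tau>0], ws @ [f])"
          using is_walk_prefix[of \<Omega> F rho "ss @ [nx \<tau>0]" _ "ws @ [f]"] dec[OF t0] w0 lss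
          by (metis length_append_singleton prod.collapse)
        hence "(ws @ [f]) ! k \<in> flaws_at F ((ss @ [nx \<tau>0]) ! k)"
          unfolding is_walk_def Let_def k_def by auto
        thus ?thesis using lss unfolding \<sigma>_def k_def by (simp add: nth_append)
      qed
      have sigO: "\<sigma> \<in> \<Omega>" using sO lss unfolding \<sigma>_def k_def by auto
      have nxO: "nx ` Y \<subseteq> \<Omega>"
      proof
        fix x assume "x \<in> nx ` Y"
        then obtain \<tau> where tY: "\<tau> \<in> Y" "x = nx \<tau>" by auto
        have "set (fst \<tau>) \<subseteq> \<Omega>" using props tY unfolding is_walk_def Let_def by auto
        thus "x \<in> \<Omega>" using dec[OF tY(1)] tY(2) by (metis Un_iff in_set_conv_decomp set_append subsetD)
      qed
      have finO: "finite \<Omega>" using set unfolding setting_def by auto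
      have "sum (walk_prob \<omega>i rho) Y = (\<Sum>x\<in>\<Omega>. sum (walk_prob \<omega>i rho) {\<tau>\<in>Y. nx \<tau> = x})"
        using sum.group[OF fin finO nxO, of "walk_prob \<omega>i rho"] by simp
      also have "\<dots> \<le> (\<Sum>x\<in>\<Omega>. walk_prob \<omega>i rho (ss, ws) * rho f \<sigma> x)"
      proof (rule sum_mono)
        fix x assume xO: "x \<in> \<Omega>"
        have eq: "walk_prob \<omega>i rho (ss @ [x], ws @ [f]) = walk_prob \<omega>i rho (ss, ws) * rho f \<sigma> x"
          using walk_prob_snoc[OF lss] unfolding \<sigma>_def k_def by simp
        show "sum (walk_prob \<omega>i rho) {\<tau>\<in>Y. nx \<tau> = x} \<le> walk_prob \<omega>i rho (ss, ws) * rho f \<sigma> x"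
        proof (cases "{\<tau>\<in>Y. nx \<tau> = x} = {}")
          case True
          show ?thesis unfolding True using walk_prob_nonneg[OF pd pw] setting_rho(1)[OF set sigO fsig xO] by simp
        next
          case False
          then obtain \<tau>1 where t1: "\<tau>1 \<in> Y" "nx \<tau>1 = x" by auto
          have w1: "is_walk \<Omega> F rho (ss @ [x], ws @ [f])"
            using is_walk_prefix[of \<Omega> F rho "ss @ [x]" _ "ws @ [f]"] dec[OF t1(1)] t1 props lss
            by (metis length_append_singleton prod.collapse)
          have "sum (walk_prob \<omega>i rho) {\<tau>\<in>Y. nx \<tau> = x} \<le> walk_prob \<omega>i rho (ss @ [x], ws @ [f])"
          proof (rule less.IH[of m])
            show "m < n" using nm by simp
            show "finite {\<tau>\<in>Y. nx \<tau> = x}" using fin by simp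
            show "is_walk \<Omega> F rho (ss @ [x], ws @ [f])" by (rule w1)
            show "\<forall>\<tau>\<in>{\<tau>\<in>Y. nx \<tau> = x}. \<forall>\<tau>'\<in>{\<tau>\<in>Y. nx \<tau> = x}. walk_prefix \<tau> \<tau>' \<longrightarrow> \<tau> = \<tau>'"
              using pf by auto
            show "\<forall>\<tau>\<in>{\<tau>\<in>Y. nx \<tau> = x}. is_walk \<Omega> F rho \<tau> \<and> follows S \<tau> \<and>
                walk_prefix (ss @ [x], ws @ [f]) \<tau> \<and> length (snd \<tau>) \<le> length (ws @ [f]) + m"
            proof
              fix \<tau> assume "\<tau> \<in> {\<tau>\<in>Y. nx \<tau> = x}"
              hence tY: "\<tau> \<in> Y" "nx \<tau> = x" by auto
              have "walk_prefix (ss @ [x], ws @ [f]) \<tau>"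
                using dec[OF tY(1)] tY(2) unfolding walk_prefix_def by (metis fst_conv snd_conv)
              thus "is_walk \<Omega> F rho \<tau> \<and> follows S \<tau> \<and>
                walk_prefix (ss @ [x], ws @ [f]) \<tau> \<and> length (snd \<tau>) \<le> length (ws @ [f]) + m"
                using props tY nm by auto
            qed
          qed
          thus ?thesis using eq by simp
        qed
      qed
      also have "\<dots> = walk_prob \<omega>i rho (ss, ws)"
        using setting_rho(2)[OF set sigO fsig] by (simp add: sum_distrib_left[symmetric])
      finally show ?thesis .
    qed
  qed
qed


lemma finite_walks:
  assumes "finite \<Omega>"
  shows "finite {ss. is_walk \<Omega> F rho (ss, W)}"
proof (rule finite_subset)
  show "{ss. is_walk \<Omega> F rho (ss, W)} \<subseteq> {xs. set xs \<subseteq> \<Omega> \<and> length xs = Suc (length W)}"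
    unfolding is_walk_def Let_def by auto
  show "finite {xs. set xs \<subseteq> \<Omega> \<and> length xs = Suc (length W)}"
    using finite_lists_length_eq[OF assms] by blast
qed

lemma gamma_facts:
  assumes set: "setting \<Omega> F rho \<omega> \<omega>i"
  shows "gamma_init \<Omega> \<omega> \<omega>i \<ge> 0" "\<And>s. s \<in> \<Omega> \<Longrightarrow> \<omega>i s \<le> gamma_init \<Omega> \<omega> \<omega>i * \<omega> s"
proof -
  have fin: "finite \<Omega>" and pos: "\<And>s. s \<in> \<Omega> \<Longrightarrow> \<omega> s > 0"
    and nn: "\<And>s. s \<in> \<Omega> \<Longrightarrow> \<omega>i s \<ge> 0" and sm: "(\<Sum>s\<in>\<Omega>. \<omega> s) = 1"
    using set unfolding setting_def prob_dist_def by auto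
  have ne: "\<Omega> \<noteq> {}" using sm by auto
  have le: "\<And>s. s \<in> \<Omega> \<Longrightarrow> \<omega>i s / \<omega> s \<le> gamma_init \<Omega> \<omega> \<omega>i"
    unfolding gamma_init_def using fin by (intro Max_ge) auto
  then obtain s0 where "s0 \<in> \<Omega>" using ne by auto
  show "gamma_init \<Omega> \<omega> \<omega>i \<ge> 0"
    using le[OF \<open>s0 \<in> \<Omega>\<close>] nn[OF \<open>s0 \<in> \<Omega>\<close>] pos[OF \<open>s0 \<in> \<Omega>\<close>]
    by (meson divide_nonneg_pos order_trans)
  fix s assume "s \<in> \<Omega>"
  thus "\<omega>i s \<le> gamma_init \<Omega> \<omega> \<omega>i * \<omega> s"
    using le[OF \<open>s \<in> \<Omega>\<close>] pos[OF \<open>s \<in> \<Omega>\<close>] by (simp add: pos_divide_le_eq)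
qed

lemma lam_nonneg:
  assumes set: "setting \<Omega> F rho \<omega> \<omega>i"
    and hl: "\<forall>f\<in>F. \<forall>s'\<in>\<Omega>.
           lam f \<ge> (\<Sum>s\<in>{s \<in> f. s' \<in> supp \<Omega> rho f s}. rho f s s' * (\<omega> s / \<omega> s'))"
    and f: "f \<in> F"
  shows "lam f \<ge> 0"
proof -
  have fin: "finite \<Omega>" and pos: "\<And>s. s \<in> \<Omega> \<Longrightarrow> \<omega> s > 0" and fO: "f \<subseteq> \<Omega>"
    and sm: "(\<Sum>s\<in>\<Omega>. \<omega> s) = 1"
    using set f unfolding setting_def prob_dist_def by auto
  have ne: "\<Omega> \<noteq> {}" using sm by auto
  then obtain s' where s': "s' \<in> \<Omega>" by auto
  have "0 \<le> (\<Sum>s\<in>{s \<in> f. s' \<in> supp \<Omega> rho f s}. rho f s s' * (\<omega> s / \<omega> s'))"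
  proof (rule sum_nonneg)
    fix s assume "s \<in> {s \<in> f. s' \<in> supp \<Omega> rho f s}"
    hence "s \<in> \<Omega>" "rho f s s' > 0" using fO unfolding supp_def by auto
    thus "0 \<le> rho f s s' * (\<omega> s / \<omega> s')" using pos[OF \<open>s \<in> \<Omega>\<close>] pos[OF s'] by simp
  qed
  thus ?thesis using hl f s' by force
qed

lemma ww_nonneg:
  assumes "\<And>f. f \<in> F \<Longrightarrow> lam f \<ge> 0" "set W \<subseteq> F"
  shows "word_weight lam W \<ge> 0"
  using assms(2) unfolding word_weight_def
  by (induction W) (auto intro!: mult_nonneg_nonneg assms(1))

lemma word_sum:
  assumes set: "setting \<Omega> F rho \<omega> \<omega>i"
    and hl: "\<forall>f\<in>F. \<forall>s'\<in>\<Omega>.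
           lam f \<ge> (\<Sum>s\<in>{s \<in> f. s' \<in> supp \<Omega> rho f s}. rho f s s' * (\<omega> s / \<omega> s'))"
  shows "set W \<subseteq> F \<Longrightarrow> \<sigma>' \<in> \<Omega> \<Longrightarrow>
    (\<Sum>ss\<in>{ss. is_walk \<Omega> F rho (ss, W) \<and> last ss = \<sigma>'}. walk_prob \<omega>i rho (ss, W))
     \<le> gamma_init \<Omega> \<omega> \<omega>i * word_weight lam W * \<omega> \<sigma>'"
proof (induction W arbitrary: \<sigma>' rule: rev_induct)
  case Nil
  have "{ss. is_walk \<Omega> F rho (ss, []) \<and> last ss = \<sigma>'} = {[\<sigma>']}"
    using Nil.prems(2) unfolding is_walk_def Let_def by (auto simp: length_Suc_conv)
  moreover have "walk_prob \<omega>i rho ([\<sigma>'], []) = \<omega>i \<sigma>'" unfolding walk_prob_def by simp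
  ultimately show ?case using gamma_facts(2)[OF set Nil.prems(2)] by (simp add: word_weight_def)
next
  case (snoc f W)
  have fin: "finite \<Omega>" and pos: "\<And>s. s \<in> \<Omega> \<Longrightarrow> \<omega> s > 0" and FO: "\<forall>f\<in>F. f \<subseteq> \<Omega>"
    using set unfolding setting_def by auto
  have pd: "prob_dist \<Omega> \<omega>i" using set unfolding setting_def by auto
  have fF: "f \<in> F" and WF: "set W \<subseteq> F" using snoc.prems(1) by auto
  have fO: "f \<subseteq> \<Omega>" using FO fF by blast
  have s'O: "\<sigma>' \<in> \<Omega>" by (rule snoc.prems(2))
  define T where "T = {s \<in> f. \<sigma>' \<in> supp \<Omega> rho f s}"
  define A where "A = (\<lambda>\<sigma>. {ss. is_walk \<Omega> F rho (ss, W) \<and> last ss = \<sigma>})"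
  define g where "g = (\<lambda>ss. walk_prob \<omega>i rho (ss, W @ [f]))"
  define B where "B = gamma_init \<Omega> \<omega> \<omega>i * word_weight lam W"
  have B0: "B \<ge> 0" unfolding B_def
    using gamma_facts(1)[OF set] ww_nonneg[OF lam_nonneg[OF set hl] WF] by simp
  have finT: "finite T" using fin fO unfolding T_def by (auto intro: finite_subset)
  have finA: "\<And>\<sigma>. finite (A \<sigma>)" unfolding A_def
    by (rule finite_subset[OF _ finite_walks[OF fin, of F rho W]]) auto
  have rpos: "\<And>\<sigma>. \<sigma> \<in> T \<Longrightarrow> rho f \<sigma> \<sigma>' > 0" unfolding T_def supp_def by auto
  have TO: "T \<subseteq> \<Omega>" using fO unfolding T_def by auto
  have gA: "\<And>\<sigma> ss. ss \<in> A \<sigma> \<Longrightarrow> g (ss @ [\<sigma>']) = walk_prob \<omega>i rho (ss, W) * rho f \<sigma> \<sigma>'"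
  proof -
    fix \<sigma> ss assume "ss \<in> A \<sigma>"
    hence w: "is_walk \<Omega> F rho (ss, W)" and l: "last ss = \<sigma>" unfolding A_def by auto
    have lss: "length ss = Suc (length W)" using w unfolding is_walk_def Let_def by auto
    have "ss \<noteq> []" using lss by auto
    hence "ss ! length W = \<sigma>" using l lss last_conv_nth[of ss] by simp
    thus "g (ss @ [\<sigma>']) = walk_prob \<omega>i rho (ss, W) * rho f \<sigma> \<sigma>'"
      unfolding g_def using walk_prob_snoc[OF lss] by simp
  qed
  have sub: "{ss'. is_walk \<Omega> F rho (ss', W @ [f]) \<and> last ss' = \<sigma>'}
      \<subseteq> (\<lambda>ss. ss @ [\<sigma>']) ` (\<Union>\<sigma>\<in>T. A \<sigma>)"
  proof
    fix ss' assume "ss' \<in> {ss'. is_walk \<Omega> F rho (ss', W @ [f]) \<and> last ss' = \<sigma>'}"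
    hence w: "is_walk \<Omega> F rho (ss', W @ [f])" and l: "last ss' = \<sigma>'" by auto
    have w': "length ss' = Suc (length (W @ [f])) \<and> set ss' \<subseteq> \<Omega> \<and>
       (\<forall>i<length (W @ [f]). (W @ [f]) ! i \<in> flaws_at F (ss' ! i) \<and>
           ss' ! Suc i \<in> supp \<Omega> rho ((W @ [f]) ! i) (ss' ! i))"
      using w unfolding is_walk_def Let_def fst_conv snd_conv .
    define ss where "ss = butlast ss'"
    have ne: "ss' \<noteq> []" using w' by auto
    have e: "ss' = ss @ [\<sigma>']" unfolding ss_def using append_butlast_last_id[OF ne] l by simp
    have lss: "length ss = Suc (length W)" using w' unfolding ss_def by simp
    have wss: "is_walk \<Omega> F rho (ss, W)"
      using is_walk_prefix[of \<Omega> F rho ss "[\<sigma>']" W "[f]"] w lss e by simp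
    have "length W < length (W @ [f])" by simp
    hence h0: "(W @ [f]) ! length W \<in> flaws_at F (ss' ! length W) \<and>
           ss' ! Suc (length W) \<in> supp \<Omega> rho ((W @ [f]) ! length W) (ss' ! length W)"
      using w' by blast
    have "ss' ! Suc (length W) = \<sigma>'" using e lss by (simp add: nth_append)
    hence h: "f \<in> flaws_at F (ss' ! length W) \<and> \<sigma>' \<in> supp \<Omega> rho f (ss' ! length W)"
      using h0 by simp
    have "ss \<noteq> []" using lss by auto
    hence "ss' ! length W = last ss" using e lss last_conv_nth[of ss] by (simp add: nth_append)
    hence "last ss \<in> T" using h unfolding T_def flaws_at_def by auto
    moreover have "ss \<in> A (last ss)" unfolding A_def using wss by simp
    ultimately show "ss' \<in> (\<lambda>ss. ss @ [\<sigma>']) ` (\<Union>\<sigma>\<in>T. A \<sigma>)" using e by blast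
  qed
  have "(\<Sum>ss\<in>{ss. is_walk \<Omega> F rho (ss, W @ [f]) \<and> last ss = \<sigma>'}. walk_prob \<omega>i rho (ss, W @ [f]))
      = sum g {ss'. is_walk \<Omega> F rho (ss', W @ [f]) \<and> last ss' = \<sigma>'}" unfolding g_def by simp
  also have "\<dots> \<le> sum g ((\<lambda>ss. ss @ [\<sigma>']) ` (\<Union>\<sigma>\<in>T. A \<sigma>))"
  proof (rule sum_mono2[OF _ sub])
    show "finite ((\<lambda>ss. ss @ [\<sigma>']) ` (\<Union>\<sigma>\<in>T. A \<sigma>))" using finT finA by auto
    fix b assume "b \<in> (\<lambda>ss. ss @ [\<sigma>']) ` (\<Union>\<sigma>\<in>T. A \<sigma>) - {ss'. is_walk \<Omega> F rho (ss', W @ [f]) \<and> last ss' = \<sigma>'}"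
    then obtain \<sigma> ss where "\<sigma> \<in> T" "ss \<in> A \<sigma>" "b = ss @ [\<sigma>']" by auto
    moreover have "walk_prob \<omega>i rho (ss, W) \<ge> 0"
      using walk_prob_nonneg[OF pd] \<open>ss \<in> A \<sigma>\<close> unfolding A_def by auto
    ultimately show "0 \<le> g b" using gA rpos by (simp add: less_imp_le)
  qed
  also have "\<dots> = sum (g \<circ> (\<lambda>ss. ss @ [\<sigma>'])) (\<Union>\<sigma>\<in>T. A \<sigma>)"
    by (rule sum.reindex) (auto simp: inj_on_def)
  also have "\<dots> = (\<Sum>\<sigma>\<in>T. sum (g \<circ> (\<lambda>ss. ss @ [\<sigma>'])) (A \<sigma>))"
    by (rule sum.UNION_disjoint[OF finT]) (auto simp: finA, auto simp: A_def)
  also have "\<dots> = (\<Sum>\<sigma>\<in>T. rho f \<sigma> \<sigma>' * (\<Sum>ss\<in>A \<sigma>. walk_prob \<omega>i rho (ss, W)))"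
    by (intro sum.cong refl) (simp add: gA sum_distrib_left mult.commute)
  also have "\<dots> \<le> (\<Sum>\<sigma>\<in>T. rho f \<sigma> \<sigma>' * (B * \<omega> \<sigma>))"
  proof (rule sum_mono)
    fix \<sigma> assume "\<sigma> \<in> T"
    have "(\<Sum>ss\<in>A \<sigma>. walk_prob \<omega>i rho (ss, W)) \<le> B * \<omega> \<sigma>"
      using snoc.IH[OF WF] \<open>\<sigma> \<in> T\<close> TO unfolding A_def B_def by auto
    thus "rho f \<sigma> \<sigma>' * (\<Sum>ss\<in>A \<sigma>. walk_prob \<omega>i rho (ss, W)) \<le> rho f \<sigma> \<sigma>' * (B * \<omega> \<sigma>)"
      using rpos[OF \<open>\<sigma> \<in> T\<close>] by (simp add: mult_left_mono)
  qed
  also have "\<dots> = B * \<omega> \<sigma>' * (\<Sum>\<sigma>\<in>T. rho f \<sigma> \<sigma>' * (\<omega> \<sigma> / \<omega> \<sigma>'))"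
    unfolding sum_distrib_left using pos[OF s'O]
    by (intro sum.cong refl) (simp add: field_simps)
  also have "\<dots> \<le> B * \<omega> \<sigma>' * lam f"
    using hl fF s'O B0 pos[OF s'O] unfolding T_def by (intro mult_left_mono) auto
  also have "\<dots> = gamma_init \<Omega> \<omega> \<omega>i * word_weight lam (W @ [f]) * \<omega> \<sigma>'"
    unfolding B_def word_weight_def by simp
  finally show ?case .
qed


theorem theorem6:
  fixes \<Omega> :: "'a set" and F :: "'a set set"
    and rho :: "'a set \<Rightarrow> 'a \<Rightarrow> 'a \<Rightarrow> real"
    and \<omega> \<omega>i :: "'a \<Rightarrow> real"
    and lam :: "'a set \<Rightarrow> real"
    and W :: "'a set list"
    and X :: "('a list \<times> 'a set list) set"
  assumes "setting \<Omega> F rho \<omega> \<omega>i"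
    and "\<forall>f\<in>F. \<forall>s'\<in>\<Omega>.
           lam f \<ge> (\<Sum>s\<in>{s \<in> f. s' \<in> supp \<Omega> rho f s}. rho f s s' * (\<omega> s / \<omega> s'))"
    and "set W \<subseteq> F"
    and "valid_walks \<Omega> F rho X"
    and "\<forall>\<tau>\<in>X. \<exists>U. snd \<tau> = W @ U"
  shows "walk_prob \<omega>i rho summable_on X \<and>
         (\<Sum>\<^sub>\<infinity>\<tau>\<in>X. walk_prob \<omega>i rho \<tau>) \<le> gamma_init \<Omega> \<omega> \<omega>i * word_weight lam W"
proof -
  note set = assms(1) and hl = assms(2) and WF = assms(3)
  define g where "g = walk_prob \<omega>i rho"
  define B where "B = gamma_init \<Omega> \<omega> \<omega>i * word_weight lam W"
  have fin: "finite \<Omega>" and pd: "prob_dist \<Omega> \<omega>i" and sm: "(\<Sum>s\<in>\<Omega>. \<omega> s) = 1"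
    using set unfolding setting_def prob_dist_def by auto
  have walks: "\<forall>\<tau>\<in>X. is_walk \<Omega> F rho \<tau>" and pf: "\<forall>\<tau>\<in>X. \<forall>\<tau>'\<in>X. walk_prefix \<tau> \<tau>' \<longrightarrow> \<tau> = \<tau>'"
    using assms(4) unfolding valid_walks_def by auto
  obtain S where fo: "\<forall>\<tau>\<in>X. follows S \<tau>" using assms(4) unfolding valid_walks_def by auto
  have nn: "\<And>\<tau>. \<tau> \<in> X \<Longrightarrow> g \<tau> \<ge> 0" unfolding g_def using walk_prob_nonneg[OF pd] walks by auto
  define WS where "WS = {ss. is_walk \<Omega> F rho (ss, W)}"
  have finWS: "finite WS" unfolding WS_def by (rule finite_walks[OF fin])
  have wsum: "sum (\<lambda>ss. g (ss, W)) WS \<le> B"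
  proof -
    have lastO: "last ` WS \<subseteq> \<Omega>"
    proof
      fix x assume "x \<in> last ` WS"
      then obtain ss where "ss \<in> WS" "x = last ss" by auto
      hence "length ss = Suc (length W)" "set ss \<subseteq> \<Omega>" unfolding WS_def is_walk_def Let_def by auto
      thus "x \<in> \<Omega>" using \<open>x = last ss\<close> by (metis last_in_set list.size(3) nat.distinct(1) subsetD)
    qed
    have "sum (\<lambda>ss. g (ss, W)) WS = (\<Sum>s\<in>\<Omega>. sum (\<lambda>ss. g (ss, W)) {ss \<in> WS. last ss = s})"
      using sum.group[OF finWS fin lastO, of "\<lambda>ss. g (ss, W)"] by simp
    also have "\<dots> \<le> (\<Sum>s\<in>\<Omega>. B * \<omega> s)"
    proof (rule sum_mono)
      fix s assume "s \<in> \<Omega>"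
      have "{ss \<in> WS. last ss = s} = {ss. is_walk \<Omega> F rho (ss, W) \<and> last ss = s}" unfolding WS_def by auto
      thus "sum (\<lambda>ss. g (ss, W)) {ss \<in> WS. last ss = s} \<le> B * \<omega> s"
        using word_sum[OF set hl WF \<open>s \<in> \<Omega>\<close>] unfolding g_def B_def by simp
    qed
    also have "\<dots> = B" using sm by (simp add: sum_distrib_left[symmetric])
    finally show ?thesis .
  qed
  have fs: "\<And>X'. finite X' \<Longrightarrow> X' \<subseteq> X \<Longrightarrow> sum g X' \<le> B"
  proof -
    fix X' assume finX: "finite X'" and sub: "X' \<subseteq> X"
    define pre where "pre = (\<lambda>\<tau>::'a list \<times> 'a set list. take (Suc (length W)) (fst \<tau>))"
    define N where "N = Max (insert 0 ((\<lambda>\<tau>. length (snd \<tau>)) ` X'))"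
    have lenN: "\<And>\<tau>. \<tau> \<in> X' \<Longrightarrow> length (snd \<tau>) \<le> length W + N"
    proof -
      fix \<tau> assume "\<tau> \<in> X'"
      hence "length (snd \<tau>) \<le> N" unfolding N_def using finX by (intro Max_ge) auto
      thus "length (snd \<tau>) \<le> length W + N" by simp
    qed
    have preinfo: "\<And>\<tau>. \<tau> \<in> X' \<Longrightarrow> pre \<tau> \<in> WS \<and> walk_prefix (pre \<tau>, W) \<tau>"
    proof -
      fix \<tau> assume tX: "\<tau> \<in> X'"
      obtain U where U: "snd \<tau> = W @ U" using assms(5) sub tX by blast
      have w: "is_walk \<Omega> F rho \<tau>" using walks sub tX by blast
      have l: "length (fst \<tau>) = Suc (length (snd \<tau>))" using w unfolding is_walk_def Let_def by auto
      have e: "fst \<tau> = pre \<tau> @ drop (Suc (length W)) (fst \<tau>)" unfolding pre_def by simp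
      have lp: "length (pre \<tau>) = Suc (length W)" unfolding pre_def using l U by simp
      have wp: "walk_prefix (pre \<tau>, W) \<tau>" unfolding walk_prefix_def fst_conv snd_conv using e U by blast
      have "is_walk \<Omega> F rho (pre \<tau> @ drop (Suc (length W)) (fst \<tau>), W @ U)" using w e U
        by (metis prod.collapse)
      hence "is_walk \<Omega> F rho (pre \<tau>, W)" using is_walk_prefix lp by blast
      thus "pre \<tau> \<in> WS \<and> walk_prefix (pre \<tau>, W) \<tau>" using wp unfolding WS_def by simp
    qed
    have preWS: "pre ` X' \<subseteq> WS" using preinfo by auto
    have "sum g X' = (\<Sum>ss\<in>WS. sum g {\<tau> \<in> X'. pre \<tau> = ss})"
      using sum.group[OF finX finWS preWS, of g] by simp
    also have "\<dots> \<le> (\<Sum>ss\<in>WS. g (ss, W))"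
    proof (rule sum_mono)
      fix ss assume ssWS: "ss \<in> WS"
      show "sum g {\<tau> \<in> X'. pre \<tau> = ss} \<le> g (ss, W)"
        unfolding g_def
      proof (rule ext_sum[OF set, where n = N and S = S])
        show "finite {\<tau> \<in> X'. pre \<tau> = ss}" using finX by simp
        show "is_walk \<Omega> F rho (ss, W)" using ssWS unfolding WS_def by simp
        show "\<forall>\<tau>\<in>{\<tau> \<in> X'. pre \<tau> = ss}. is_walk \<Omega> F rho \<tau> \<and> follows S \<tau> \<and>
            walk_prefix (ss, W) \<tau> \<and> length (snd \<tau>) \<le> length W + N"
          using walks fo sub preinfo lenN by auto
        show "\<forall>\<tau>\<in>{\<tau> \<in> X'. pre \<tau> = ss}. \<forall>\<tau>'\<in>{\<tau> \<in> X'. pre \<tau> = ss}. walk_prefix \<tau> \<tau>' \<longrightarrow> \<tau> = \<tau>'"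
          using pf sub by blast
      qed
    qed
    also have "\<dots> \<le> B" by (rule wsum)
    finally show "sum g X' \<le> B" .
  qed
  have summ: "g summable_on X"
  proof (rule nonneg_bdd_above_summable_on)
    show "\<And>x. x \<in> X \<Longrightarrow> 0 \<le> g x" by (rule nn)
    show "bdd_above (sum g ` {F. F \<subseteq> X \<and> finite F})"
      by (rule bdd_aboveI[of _ B]) (auto intro: fs)
  qed
  moreover have "infsum g X \<le> B"
    by (rule infsum_le_finite_sums[OF summ fs])
  ultimately show ?thesis unfolding g_def B_def by simp
qed

end
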